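(* Let $\lambda_1>\lambda_0>0$, $a,b>0$ with $\lambda_1-\lambda_0>\frac1a+\frac1b$, and let $0<\alpha^*<b/a<\beta^*$ be the optimal stopping boundaries described in the context. Let $f_0$ be the (unique continuous) solution of $$(\lambda_0-\lambda_1)\varphi f_0'(\varphi)+\lambda_0[f_0(\lambda_1\varphi/\lambda_0)-f_0(\varphi)]=0\ \text{ for }\varphi\in(\alpha^*/\beta^*,1),\qquad f_0(1)=1,\quad f_0(\varphi)=0\ \text{for }\varphi>1,$$ and let $f_1$ be the (unique continuous) solution of $$(\lambda_0-\lambda_1)\varphi f_1'(\varphi)+\lambda_0[f_1(\lambda_1\varphi/\lambda_0)-f_1(\varphi)]+(\varphi-1)=0\ \text{ for }\varphi\in(\alpha^*/\beta^*,1),\qquad f_1(1)=0,\quad f_1(\varphi)=-b\ \text{for }\varphi>1.$$ Then $f_0$ and $f_1$ are strictly decreasing on $[\alpha^*/\beta^*,1]$.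
   Context: Setting: $X$ is a Poisson process with $X_0=0$ which under $\mathsf P_0$ ($\mathsf E_0$ its expectation) has intensity $\lambda_0$; $L_t=\exp\{X_t\log(\lambda_1/\lambda_0)-(\lambda_1-\lambda_0)t\}$; $\mathbb S$ is the set of stopping times of the natural filtration of $X$. For $\psi>0$ and $\tau\in\mathbb S$, $\bar J(\psi;\tau)=\frac{1}{1+\psi}\mathsf E_0\big[\int_0^\tau(1+\psi L_t)\,dt+(a\psi L_\tau)\wedge b\big]$. When $\lambda_1-\lambda_0>1/a+1/b$ there exist unique constants $0<\alpha^*<b/a<\beta^*$ (independent of $\psi$) such that for every $\psi>0$ the stopping time $\inf\{t\ge0:\psi L_t\notin(\alpha^*,\beta^* )\}$ minimizes $\bar J(\psi;\cdot)$ over $\mathbb S$. *)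

theory Defs
  imports "HOL-Probability.Probability"
begin

definition poisson_process :: "'a measure \<Rightarrow> (real \<Rightarrow> 'a \<Rightarrow> nat) \<Rightarrow> real \<Rightarrow> bool" where
  "poisson_process M X lam \<longleftrightarrow>
     prob_space M \<and>
     (\<forall>t. X t \<in> M \<rightarrow>\<^sub>M count_space UNIV) \<and>
     (\<forall>\<omega>\<in>space M. X 0 \<omega> = 0 \<and> mono_on {0..} (\<lambda>t. X t \<omega>) \<and>
        (\<forall>t\<ge>0. continuous (at_right t) (\<lambda>s. real (X s \<omega>)))) \<and>
     (\<forall>s t k. 0 \<le> s \<longrightarrow> s \<le> t \<longrightarrow>
        measure M {\<omega>\<in>space M. X t \<omega> - X s \<omega> = k}
          = exp (- lam * (t - s)) * (lam * (t - s)) ^ k / fact k) \<and>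
     (\<forall>(ts :: nat \<Rightarrow> real) n. (\<forall>i. 0 \<le> ts i \<and> ts i \<le> ts (Suc i)) \<longrightarrow>
        prob_space.indep_vars M (\<lambda>_. count_space UNIV)
          (\<lambda>i \<omega>. X (ts (Suc i)) \<omega> - X (ts i) \<omega>) {..<n})"

definition nat_filtration :: "'a measure \<Rightarrow> (real \<Rightarrow> 'a \<Rightarrow> nat) \<Rightarrow> real \<Rightarrow> 'a measure" where
  "nat_filtration M X t =
     sigma (space M) {X s -` A \<inter> space M | s A. 0 \<le> s \<and> s \<le> t}"

definition nat_stopping_time :: "'a measure \<Rightarrow> (real \<Rightarrow> 'a \<Rightarrow> nat) \<Rightarrow> ('a \<Rightarrow> ennreal) \<Rightarrow> bool" where
  "nat_stopping_time M X \<tau> \<longleftrightarrow>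
     (\<forall>t\<ge>0. {\<omega>\<in>space M. \<tau> \<omega> \<le> ennreal t} \<in> sets (nat_filtration M X t))"

definition LR :: "(real \<Rightarrow> 'a \<Rightarrow> nat) \<Rightarrow> real \<Rightarrow> real \<Rightarrow> real \<Rightarrow> 'a \<Rightarrow> real" where
  "LR X lam0 lam1 t \<omega> = exp (real (X t \<omega>) * ln (lam1 / lam0) - (lam1 - lam0) * t)"

text \<open>On {tau = \<infinity>} the time integral is
  infinite, so the (bounded) terminal term there is irrelevant.\<close>
definition Jbar :: "'a measure \<Rightarrow> (real \<Rightarrow> 'a \<Rightarrow> nat) \<Rightarrow> real \<Rightarrow> real \<Rightarrow> real \<Rightarrow> real \<Rightarrow> real
                    \<Rightarrow> ('a \<Rightarrow> ennreal) \<Rightarrow> ennreal" where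
  "Jbar M X lam0 lam1 a b \<psi> \<tau> =
     ennreal (1 / (1 + \<psi>)) *
     (\<integral>\<^sup>+ \<omega>. ((\<integral>\<^sup>+ t. indicator {t. 0 \<le> t \<and> ennreal t < \<tau> \<omega>} t
                        * ennreal (1 + \<psi> * LR X lam0 lam1 t \<omega>) \<partial>lborel)
              + ennreal (min (a * \<psi> * LR X lam0 lam1 (enn2real (\<tau> \<omega>)) \<omega>) b)) \<partial>M)"

text \<open>The exit time inf{t >= 0 : psi L_t \<notin> (alpha, beta)} (inf of the empty set is \<infinity>).\<close>
definition exit_time :: "(real \<Rightarrow> 'a \<Rightarrow> nat) \<Rightarrow> real \<Rightarrow> real \<Rightarrow> real \<Rightarrow> real \<Rightarrow> real \<Rightarrow> 'a \<Rightarrow> ennreal" where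
  "exit_time X lam0 lam1 \<psi> \<alpha> \<beta> \<omega> =
     Inf {ennreal t | t. 0 \<le> t \<and> \<psi> * LR X lam0 lam1 t \<omega> \<notin> {\<alpha><..<\<beta>}}"

end

theory Submission
  imports Defs "HOL-Analysis.Analysis"
begin

lemma mono_core:
  fixes f :: "real \<Rightarrow> real" and lo p :: real
  assumes lo1: "lo < 1" and cont: "continuous_on {lo..1} f"
    and der: "\<And>t. lo < t \<Longrightarrow> t < 1 \<Longrightarrow> t \<noteq> p \<Longrightarrow> \<exists>d. (f has_real_derivative d) (at t)"
    and key: "\<And>z. lo < z \<Longrightarrow> z \<le> 1 \<Longrightarrow> (\<And>\<psi>. z < \<psi> \<Longrightarrow> \<psi> \<le> 1 \<Longrightarrow> f \<psi> < f z) \<Longrightarrow> f 1 \<le> f z \<Longrightarrow>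
        eventually (\<lambda>t. \<forall>d. (f has_real_derivative d) (at t) \<longrightarrow> d < 0) (at_left z)"
  shows "\<forall>x\<in>{lo..1}. \<forall>y\<in>{lo..1}. x < y \<longrightarrow> f y < f x"
proof (intro ballI impI)
  fix x y assume x: "x \<in> {lo..1}" and y: "y \<in> {lo..1}" and xy: "x < y"
  show "f y < f x"
  proof (rule ccontr)
    assume "\<not> f y < f x"
    hence fxy: "f x \<le> f y" by simp
    have cx: "continuous_on {x..1} f" using cont x by (auto intro: continuous_on_subset)
    obtain m where m: "m \<in> {x..1}" "\<forall>t\<in>{x..1}. f t \<le> f m"
      using continuous_attains_sup[OF compact_Icc _ cx] x by (metis atLeastAtMost_iff atLeastatMost_empty_iff2 order.trans)
    define K where "K = {t \<in> {x..1}. f t = f m}"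
    have "closed K" unfolding K_def by (rule continuous_closed_preimage_constant[OF cx closed_atLeastAtMost])
    moreover have "bounded K" unfolding K_def by (rule bounded_subset[OF bounded_closed_interval]) auto
    ultimately have "compact K" using compact_eq_bounded_closed by blast
    have "K \<noteq> {}" using m K_def by auto
    obtain z where z: "z \<in> K" "\<forall>t\<in>K. t \<le> z" using compact_attains_sup[OF \<open>compact K\<close> \<open>K \<noteq> {}\<close>] by auto
    have zx: "x < z"
    proof (rule ccontr)
      assume "\<not> x < z"
      hence "z = x" using z K_def by auto
      hence "f x = f m" using z K_def by auto
      moreover have "f y \<le> f m" using m(2) y xy by auto
      ultimately have "f y = f m" using fxy by linarith
      hence "y \<in> K" using K_def y xy by auto
      thus False using z \<open>z = x\<close> xy by auto
    qed
    have z1: "z \<le> 1" and fz: "f z = f m" using z K_def by auto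
    have right: "f \<psi> < f z" if "z < \<psi>" "\<psi> \<le> 1" for \<psi>
    proof -
      have "f \<psi> \<le> f m" using m that zx by auto
      moreover have "\<psi> \<notin> K"
      proof
        assume "\<psi> \<in> K"
        hence "\<psi> \<le> z" using z(2) by blast
        thus False using that(1) by simp
      qed
      ultimately show ?thesis using fz K_def that zx by auto
    qed
    have f1: "f 1 \<le> f z" using m fz xy y by auto
    have lz: "lo < z" using x zx by auto
    have ev: "eventually (\<lambda>t. \<forall>d. (f has_real_derivative d) (at t) \<longrightarrow> d < 0) (at_left z)"
      using key[OF lz z1 right f1] by blast
    define q where "q = (if p < z then max x p else x)"
    have qz: "q < z" using zx q_def by auto
    have "eventually (\<lambda>t. t \<in> {q<..<z} \<and> (\<forall>d. (f has_real_derivative d) (at t) \<longrightarrow> d < 0)) (at_left z)"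
      using eventually_conj[OF eventually_at_left_real[OF qz] ev] .
    then obtain b where b: "b < z" "\<forall>t. b < t \<longrightarrow> t < z \<longrightarrow> t \<in> {q<..<z} \<and> (\<forall>d. (f has_real_derivative d) (at t) \<longrightarrow> d < 0)"
      using eventually_at_left[OF qz] by (metis (no_types, lifting) eventually_at_left_field)
    define t0 where "t0 = (max b q + z) / 2"
    have t0: "max b q < t0" "t0 < z" using b qz t0_def by auto
    have "f z < f t0"
    proof (rule DERIV_neg_imp_decreasing_open[OF t0(2)])
      fix u assume u: "t0 < u" "u < z"
      have "u \<noteq> p" using u t0 q_def by (auto split: if_splits)
      moreover have "lo < u" "u < 1" using u t0 x q_def z1 by (auto split: if_splits)
      ultimately obtain d where dd: "(f has_real_derivative d) (at u)" using der by blast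
      have bu: "b < u" using t0 u by linarith
      have "d < 0" using b(2) bu u(2) dd by blast
      with dd show "\<exists>y. (f has_real_derivative y) (at u) \<and> y < 0" by blast
    next
      show "continuous_on {t0..z} f" using cx t0 q_def z1 by (auto intro: continuous_on_subset split: if_splits)
    qed
    moreover have "f t0 \<le> f m" using m t0 q_def z1 by (auto split: if_splits)
    ultimately show False using fz by simp
  qed
qed


lemma key_gen:
  fixes f :: "real \<Rightarrow> real" and lo lam0 lam1 c w z :: real
  assumes lo: "0 < lo" and l0: "0 < lam0" and l01: "lam0 < lam1" and c: "0 \<le> c"
    and cont: "continuous_on {lo..1} f" and w: "w < f 1" and wb: "\<forall>\<phi>>1. f \<phi> = w"
    and ode: "\<forall>\<phi>\<in>{lo<..<1} - {lam0 / lam1}. \<exists>d. (f has_real_derivative d) (at \<phi>) \<and>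
               (lam0 - lam1) * \<phi> * d + lam0 * (f (lam1 * \<phi> / lam0) - f \<phi>) + c * (\<phi> - 1) = 0"
    and z: "lo < z" "z \<le> 1" and right: "\<And>\<psi>. z < \<psi> \<Longrightarrow> \<psi> \<le> 1 \<Longrightarrow> f \<psi> < f z" and f1: "f 1 \<le> f z"
  shows "eventually (\<lambda>t. \<forall>d. (f has_real_derivative d) (at t) \<longrightarrow> d < 0) (at_left z)"
proof -
  define E where "E t = lam0 * (f (lam1 * t / lam0) - f t) + c * (t - 1)" for t
  have cz: "continuous_on {lo..z} f" using cont z by (auto intro: continuous_on_subset)
  have fz: "(f \<longlongrightarrow> f z) (at_left z)" using continuous_on_Icc_at_leftD[OF cz z(1)] .
  have ge: "t \<le> lam1 * t / lam0" if "0 \<le> t" for t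
  proof -
    have "lam0 * t \<le> lam1 * t" using that l01 by (simp add: mult_right_mono)
    thus ?thesis using l0 by (simp add: field_simps)
  qed
  have evE: "eventually (\<lambda>t. E t < 0) (at_left z)"
  proof (cases "lam1 * z / lam0 \<le> 1")
    case True
    have img: "(\<lambda>t. lam1 * t / lam0) ` {lo..z} \<subseteq> {lo..1}"
    proof
      fix s assume "s \<in> (\<lambda>t. lam1 * t / lam0) ` {lo..z}"
      then obtain t where t: "t \<in> {lo..z}" "s = lam1 * t / lam0" by auto
      have "t \<le> s" using ge[of t] t lo by auto
      moreover have "s \<le> lam1 * z / lam0" using t l0 l01 by (auto simp: divide_right_mono mult_left_mono)
      ultimately show "s \<in> {lo..1}" using t True by auto
    qed
    have "continuous_on {lo..z} (\<lambda>t. f (lam1 * t / lam0))"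
      by (rule continuous_on_compose2[OF cont _ img]) (use l0 in \<open>auto intro!: continuous_intros\<close>)
    hence "continuous_on {lo..z} E" unfolding E_def using cz by (intro continuous_intros) auto
    hence "(E \<longlongrightarrow> E z) (at_left z)" using continuous_on_Icc_at_leftD z(1) by blast
    moreover have "E z < 0"
    proof -
      have "z < lam1 * z / lam0" using z lo l0 l01 by (simp add: field_simps)
      hence "f (lam1 * z / lam0) < f z" using right True by auto
      hence "lam0 * (f (lam1 * z / lam0) - f z) < 0" using l0 by (simp add: mult_pos_neg)
      moreover have "c * (z - 1) \<le> 0" using c z by (simp add: mult_nonneg_nonpos)
      ultimately show ?thesis unfolding E_def by linarith
    qed
    ultimately show ?thesis using order_tendstoD(2) by blast
  next
    case False
    have tend: "((\<lambda>t. lam1 * t / lam0) \<longlongrightarrow> lam1 * z / lam0) (at_left z)" using l0 by (auto intro!: tendsto_intros)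
    have "1 < lam1 * z / lam0" using False by simp
    hence ev1: "eventually (\<lambda>t. 1 < lam1 * t / lam0) (at_left z)" by (rule order_tendstoD(1)[OF tend])
    have "((\<lambda>t. lam0 * (w - f t) + c * (t - 1)) \<longlongrightarrow> lam0 * (w - f z) + c * (z - 1)) (at_left z)"
      using fz by (intro tendsto_intros)
    moreover have "lam0 * (w - f z) + c * (z - 1) < 0"
    proof -
      have "lam0 * (w - f z) < 0" using l0 w f1 by (simp add: mult_pos_neg)
      moreover have "c * (z - 1) \<le> 0" using c z by (simp add: mult_nonneg_nonpos)
      ultimately show ?thesis by linarith
    qed
    ultimately have "eventually (\<lambda>t. lam0 * (w - f t) + c * (t - 1) < 0) (at_left z)"
      using order_tendstoD(2) by blast
    thus ?thesis using ev1 by eventually_elim (use wb in \<open>auto simp: E_def\<close>)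
  qed
  define q where "q = (if lam0 / lam1 < z then max lo (lam0 / lam1) else lo)"
  have qz: "q < z" using z q_def by auto
  show ?thesis
    using eventually_conj[OF eventually_at_left_real[OF qz] evE]
  proof eventually_elim
    case (elim t)
    have t: "t \<in> {lo<..<1} - {lam0 / lam1}" using elim q_def z by (auto split: if_splits)
    then obtain d' where d': "(f has_real_derivative d') (at t)"
      "(lam0 - lam1) * t * d' + lam0 * (f (lam1 * t / lam0) - f t) + c * (t - 1) = 0"
      using ode by blast
    show ?case
    proof (intro allI impI)
      fix d assume "(f has_real_derivative d) (at t)"
      hence "d = d'" using d'(1) DERIV_unique by blast
      hence eq: "(lam0 - lam1) * t * d = - E t" using d'(2) unfolding E_def by simp
      show "d < 0"
      proof (rule ccontr)
        assume "\<not> d < 0"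
        have "(lam0 - lam1) * t < 0" using l01 t lo by (simp add: mult_neg_pos)
        hence "(lam0 - lam1) * t * d \<le> 0" using \<open>\<not> d < 0\<close> by (simp add: mult_nonpos_nonneg)
        thus False using eq elim by linarith
      qed
    qed
  qed
qed

lemma strict_gen:
  fixes f :: "real \<Rightarrow> real" and lo lam0 lam1 c w :: real
  assumes lo: "0 < lo" "lo < 1" and l0: "0 < lam0" and l01: "lam0 < lam1" and c: "0 \<le> c"
    and cont: "continuous_on {lo..1} f" and w: "w < f 1" and wb: "\<forall>\<phi>>1. f \<phi> = w"
    and ode: "\<forall>\<phi>\<in>{lo<..<1} - {lam0 / lam1}. \<exists>d. (f has_real_derivative d) (at \<phi>) \<and>
               (lam0 - lam1) * \<phi> * d + lam0 * (f (lam1 * \<phi> / lam0) - f \<phi>) + c * (\<phi> - 1) = 0"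
  shows "\<forall>x\<in>{lo..1}. \<forall>y\<in>{lo..1}. x < y \<longrightarrow> f y < f x"
proof (rule mono_core[OF lo(2) cont, of "lam0 / lam1"])
  fix t assume "lo < t" "t < 1" "t \<noteq> lam0 / lam1"
  thus "\<exists>d. (f has_real_derivative d) (at t)" using ode by auto
next
  fix z assume "lo < z" "z \<le> 1" "\<And>\<psi>. z < \<psi> \<Longrightarrow> \<psi> \<le> 1 \<Longrightarrow> f \<psi> < f z" "f 1 \<le> f z"
  thus "eventually (\<lambda>t. \<forall>d. (f has_real_derivative d) (at t) \<longrightarrow> d < 0) (at_left z)"
    using key_gen[OF lo(1) l0 l01 c cont w wb ode] by blast
qed

theorem lemma3p3:
  fixes M :: "'a measure" and X :: "real \<Rightarrow> 'a \<Rightarrow> nat"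
    and lam0 lam1 a b \<alpha> \<beta> :: real and f0 f1 :: "real \<Rightarrow> real"
  assumes "0 < lam0" "lam0 < lam1" "0 < a" "0 < b" "lam1 - lam0 > 1 / a + 1 / b"
    and "poisson_process M X lam0"
    and "0 < \<alpha>" "\<alpha> < b / a" "b / a < \<beta>"
    and opt: "\<forall>\<psi>>0. \<forall>\<tau>. nat_stopping_time M X \<tau> \<longrightarrow>
               Jbar M X lam0 lam1 a b \<psi> (exit_time X lam0 lam1 \<psi> \<alpha> \<beta>) \<le> Jbar M X lam0 lam1 a b \<psi> \<tau>"
    and f0_cont: "continuous_on {\<alpha> / \<beta>..1} f0"
    and f0_ode: "\<forall>\<phi>\<in>{\<alpha> / \<beta><..<1} - {lam0 / lam1}. \<exists>d. (f0 has_real_derivative d) (at \<phi>) \<and>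
               (lam0 - lam1) * \<phi> * d + lam0 * (f0 (lam1 * \<phi> / lam0) - f0 \<phi>) = 0"
    and f0_bd: "f0 1 = 1" "\<forall>\<phi>>1. f0 \<phi> = 0"
    and f1_cont: "continuous_on {\<alpha> / \<beta>..1} f1"
    and f1_ode: "\<forall>\<phi>\<in>{\<alpha> / \<beta><..<1} - {lam0 / lam1}. \<exists>d. (f1 has_real_derivative d) (at \<phi>) \<and>
               (lam0 - lam1) * \<phi> * d + lam0 * (f1 (lam1 * \<phi> / lam0) - f1 \<phi>) + (\<phi> - 1) = 0"
    and f1_bd: "f1 1 = 0" "\<forall>\<phi>>1. f1 \<phi> = - b"
  shows "(\<forall>x\<in>{\<alpha> / \<beta>..1}. \<forall>y\<in>{\<alpha> / \<beta>..1}. x < y \<longrightarrow> f0 y < f0 x) \<and>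
         (\<forall>x\<in>{\<alpha> / \<beta>..1}. \<forall>y\<in>{\<alpha> / \<beta>..1}. x < y \<longrightarrow> f1 y < f1 x)"
  proof -
  have bpos: "0 < b / a" using assms(3,4) by simp
  have ab: "\<alpha> < \<beta>" "0 < \<beta>" using assms(7,8,9) bpos by linarith+
  have lo1: "0 < \<alpha> / \<beta>" using assms(7) ab(2) by (rule divide_pos_pos)
  have lo2: "\<alpha> / \<beta> < 1" using ab by (simp add: divide_less_eq_1)
  note lo = lo1 lo2
  have w0: "(0::real) < f0 1" using f0_bd(1) by simp
  have ode0: "\<forall>\<phi>\<in>{\<alpha> / \<beta><..<1} - {lam0 / lam1}. \<exists>d. (f0 has_real_derivative d) (at \<phi>) \<and>
               (lam0 - lam1) * \<phi> * d + lam0 * (f0 (lam1 * \<phi> / lam0) - f0 \<phi>) + 0 * (\<phi> - 1) = 0"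
    using f0_ode by simp
  have w1: "- b < f1 1" using f1_bd(1) assms(4) by simp
  have ode1: "\<forall>\<phi>\<in>{\<alpha> / \<beta><..<1} - {lam0 / lam1}. \<exists>d. (f1 has_real_derivative d) (at \<phi>) \<and>
               (lam0 - lam1) * \<phi> * d + lam0 * (f1 (lam1 * \<phi> / lam0) - f1 \<phi>) + 1 * (\<phi> - 1) = 0"
    using f1_ode by simp
  have A: "\<forall>x\<in>{\<alpha> / \<beta>..1}. \<forall>y\<in>{\<alpha> / \<beta>..1}. x < y \<longrightarrow> f0 y < f0 x"
    by (rule strict_gen[OF lo assms(1,2) order_refl f0_cont w0 f0_bd(2) ode0])
  have B: "\<forall>x\<in>{\<alpha> / \<beta>..1}. \<forall>y\<in>{\<alpha> / \<beta>..1}. x < y \<longrightarrow> f1 y < f1 x"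
    by (rule strict_gen[OF lo assms(1,2) zero_le_one f1_cont w1 f1_bd(2) ode1])
  show ?thesis using A B by blast
qed

end
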